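(* Let $p_{0,0},p_{1,0}\in[0,1]$ with $p_{0,0}<p_{1,0}$ (negatively correlated arm) and $0\le\rho_0<\rho_1\le1$. Then the belief updates $\gamma_0$ and $\gamma_1$ defined in the context are decreasing in $\pi\in[0,1]$; moreover $\gamma_1$ is concave and $\gamma_0$ is convex, and $p_{0,0}\le\gamma_0(\pi)\le\gamma_1(\pi)\le p_{1,0}$ for all $\pi\in[0,1]$.
   Context: For $\pi\in[0,1]$ define $\gamma_1(\pi)=\frac{(1-\pi)\rho_1p_{1,0}+\pi\rho_0p_{0,0}}{\rho_1(1-\pi)+\rho_0\pi}$ and $\gamma_0(\pi)=\frac{(1-\pi)(1-\rho_1)p_{1,0}+\pi(1-\rho_0)p_{0,0}}{(1-\rho_1)(1-\pi)+(1-\rho_0)\pi}$. (These are the posterior probabilities of hidden state $0$ of a two-state Markov chain with transition probability $p_{i,0}$ from state $i$ to $0$, after an ACK, respectively a NACK, where $\rho_i$ is the ACK probability in state $i$.) *)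

theory Defs
  imports "HOL-Analysis.Analysis"
begin

definition gamma1 :: "real \<Rightarrow> real \<Rightarrow> real \<Rightarrow> real \<Rightarrow> real \<Rightarrow> real" where
  "gamma1 p00 p10 \<rho>0 \<rho>1 \<pi> =
     ((1 - \<pi>) * \<rho>1 * p10 + \<pi> * \<rho>0 * p00) / (\<rho>1 * (1 - \<pi>) + \<rho>0 * \<pi>)"

definition gamma0 :: "real \<Rightarrow> real \<Rightarrow> real \<Rightarrow> real \<Rightarrow> real \<Rightarrow> real" where
  "gamma0 p00 p10 \<rho>0 \<rho>1 \<pi> =
     ((1 - \<pi>) * (1 - \<rho>1) * p10 + \<pi> * (1 - \<rho>0) * p00) /
     ((1 - \<rho>1) * (1 - \<pi>) + (1 - \<rho>0) * \<pi>)"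

definition dom1 :: "real \<Rightarrow> real \<Rightarrow> real set" where
  "dom1 \<rho>0 \<rho>1 = {\<pi>. 0 \<le> \<pi> \<and> \<pi> \<le> 1 \<and> \<rho>1 * (1 - \<pi>) + \<rho>0 * \<pi> \<noteq> 0}"

definition dom0 :: "real \<Rightarrow> real \<Rightarrow> real set" where
  "dom0 \<rho>0 \<rho>1 = {\<pi>. 0 \<le> \<pi> \<and> \<pi> \<le> 1 \<and> (1 - \<rho>1) * (1 - \<pi>) + (1 - \<rho>0) * \<pi> \<noteq> 0}"

end

theory Submission
  imports Defs
begin

lemma pos_comb:
  fixes aa bb u w :: real
  assumes "aa > 0" "bb > 0" "u \<ge> 0" "w \<ge> 0" "u + w = 1"
  shows "u*aa + w*bb > 0"
proof (cases "u = 0")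
  case True
  hence "w = 1" using assms by simp
  thus ?thesis using True assms by simp
next
  case False
  hence "u > 0" using assms by simp
  hence "u*aa > 0" using assms by simp
  moreover have "w*bb \<ge> 0" using assms by simp
  ultimately show ?thesis by linarith
qed

lemma lin_comb:
  fixes m q u w x y :: real
  assumes "u + w = 1"
  shows "m*(u*x+w*y)+q = u*(m*x+q) + w*(m*y+q)"
proof -
  have "u*(m*x+q) + w*(m*y+q) = m*(u*x+w*y) + (u+w)*q" by (simp add: algebra_simps)
  thus ?thesis using assms by simp
qed

lemma inv_ineq:
  fixes aa bb u w :: real
  assumes "aa > 0" "bb > 0" "u \<ge> 0" "w \<ge> 0" "u + w = 1"
  shows "1 / (u*aa + w*bb) \<le> u / aa + w / bb"
proof -
  have pos: "u*aa + w*bb > 0"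
    using pos_comb assms by blast
  have "1 \<le> (u*aa + w*bb) * (u / aa + w / bb)"
  proof -
    have "(u*aa + w*bb) * (u / aa + w / bb) = u*u + w*w + u*w*(aa/bb + bb/aa)"
      using assms by (simp add: field_simps)
    moreover have "aa/bb + bb/aa \<ge> 2"
    proof -
      have "(aa - bb)^2 \<ge> 0" by simp
      hence "aa*aa + bb*bb \<ge> 2*aa*bb" by (simp add: power2_eq_square algebra_simps)
      thus ?thesis using assms by (simp add: field_simps)
    qed
    moreover have "u*w \<ge> 0" using assms by simp
    ultimately have "(u*aa + w*bb) * (u / aa + w / bb) \<ge> u*u + w*w + u*w*2"
      using mult_left_mono[of 2 "aa/bb + bb/aa" "u*w"] by linarith
    moreover have "u*u + w*w + u*w*2 = (u+w)^2" by (simp add: power2_eq_square algebra_simps)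
    ultimately show ?thesis using assms by simp
  qed
  thus ?thesis using pos by (simp add: divide_simps mult.commute)
qed

lemma conv_inv:
  fixes S :: "real set" and f :: "real \<Rightarrow> real"
  assumes cS: "convex S" and pos: "\<And>x. x \<in> S \<Longrightarrow> m*x+q > 0" and k: "k \<ge> 0"
    and f: "\<And>x. x \<in> S \<Longrightarrow> f x = c + k/(m*x+q)"
  shows "convex_on S f"
  unfolding convex_on_def
proof (intro conjI cS ballI allI impI)
  fix x y u w :: real
  assume xy: "x \<in> S" "y \<in> S" and uv: "0 \<le> u" "0 \<le> w" "u + w = 1"
  have m: "u *\<^sub>R x + w *\<^sub>R y \<in> S" using cS xy uv by (simp add: convex_def)
  have e: "m*(u*x+w*y)+q = u*(m*x+q) + w*(m*y+q)" using lin_comb uv(3) by blast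
  have i: "1/(u*(m*x+q) + w*(m*y+q)) \<le> u/(m*x+q) + w/(m*y+q)"
    using inv_ineq pos xy uv by blast
  have "k/(u*(m*x+q) + w*(m*y+q)) \<le> u*(k/(m*x+q)) + w*(k/(m*y+q))"
    using mult_left_mono[OF i k] by (simp add: algebra_simps)
  moreover have "u*(c + k/(m*x+q)) + w*(c + k/(m*y+q)) = (u+w)*c + (u*(k/(m*x+q)) + w*(k/(m*y+q)))"
    by (simp add: algebra_simps)
  ultimately have "c + k/(m*(u*x+w*y)+q) \<le> u*(c + k/(m*x+q)) + w*(c + k/(m*y+q))"
    unfolding e using uv(3) by simp
  thus "f (u *\<^sub>R x + w *\<^sub>R y) \<le> u * f x + w * f y"
    using f[OF m] f[OF xy(1)] f[OF xy(2)] by simp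
qed

lemma convex_dom:
  fixes m q :: real
  shows "convex {x::real. 0 \<le> x \<and> x \<le> 1 \<and> m*x+q > 0}"
  unfolding convex_def
proof (intro ballI allI impI)
  fix x y u w :: real
  assume xy: "x \<in> {x. 0 \<le> x \<and> x \<le> 1 \<and> m*x+q > 0}" "y \<in> {x. 0 \<le> x \<and> x \<le> 1 \<and> m*x+q > 0}"
    and uv: "0 \<le> u" "0 \<le> w" "u + w = 1"
  have e: "m*(u*x+w*y)+q = u*(m*x+q) + w*(m*y+q)" using lin_comb uv(3) by blast
  have "u*(m*x+q) + w*(m*y+q) > 0"
    using pos_comb[of "m*x+q" "m*y+q" u w] xy uv by simp
  moreover have "0 \<le> u*x+w*y" using xy uv by simp
  moreover have "u*x+w*y \<le> u*1+w*1" using xy uv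
    by (intro add_mono mult_left_mono) auto
  ultimately show "u *\<^sub>R x + w *\<^sub>R y \<in> {x. 0 \<le> x \<and> x \<le> 1 \<and> m*x+q > 0}"
    using e uv by simp
qed

lemma g1form:
  fixes p00 p10 r0 r1 x :: real
  assumes d: "r1 - r0 \<noteq> 0" and D: "(r0 - r1) * x + r1 \<noteq> 0"
  shows "((1 - x) * r1 * p10 + x * r0 * p00) / (r1 * (1 - x) + r0 * x)
       = (p00 + (p10 - p00) * r1 / (r1 - r0)) - ((p10 - p00) * r1 * r0 / (r1 - r0)) / ((r0 - r1) * x + r1)"
proof -
  define DD where "DD = (r0 - r1) * x + r1"
  define e where "e = r1 - r0"
  define c where "c = p10 - p00"
  have De: "r1 * (1 - x) + r0 * x = DD" by (simp add: DD_def algebra_simps)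
  have h: "DD - r0 = e * (1 - x)" by (simp add: DD_def e_def algebra_simps)
  have N: "(1 - x) * r1 * p10 + x * r0 * p00 = p00 * DD + c * r1 * (1 - x)"
    by (simp add: DD_def c_def algebra_simps)
  have D': "DD \<noteq> 0" using D DD_def by simp
  have d': "e \<noteq> 0" using d e_def by simp
  have "(p00 + c * r1 / e) - (c * r1 * r0 / e) / DD = (p00 * DD + c * r1 * (DD - r0) / e) / DD"
    using d' D' by (simp add: field_simps)
  also have "\<dots> = (p00 * DD + c * r1 * (1 - x)) / DD"
    unfolding h using d' by simp
  finally show ?thesis unfolding De N DD_def[symmetric] e_def[symmetric] c_def[symmetric] by simp
qed

lemma g0form:
  fixes p00 p10 r0 r1 x :: real
  assumes d: "r1 - r0 \<noteq> 0" and D: "(r1 - r0) * x + (1 - r1) \<noteq> 0"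
  shows "((1 - x) * (1 - r1) * p10 + x * (1 - r0) * p00) / ((1 - r1) * (1 - x) + (1 - r0) * x)
       = (p00 - (p10 - p00) * (1 - r1) / (r1 - r0)) + ((p10 - p00) * (1 - r1) * (1 - r0) / (r1 - r0)) / ((r1 - r0) * x + (1 - r1))"
proof -
  define DD where "DD = (r1 - r0) * x + (1 - r1)"
  define e where "e = r1 - r0"
  define c where "c = p10 - p00"
  have De: "(1 - r1) * (1 - x) + (1 - r0) * x = DD" by (simp add: DD_def algebra_simps)
  have h: "1 - r0 - DD = e * (1 - x)" by (simp add: DD_def e_def algebra_simps)
  have N: "(1 - x) * (1 - r1) * p10 + x * (1 - r0) * p00 = p00 * DD + c * (1 - r1) * (1 - x)"
    by (simp add: DD_def c_def algebra_simps)
  have D': "DD \<noteq> 0" using D DD_def by simp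
  have d': "e \<noteq> 0" using d e_def by simp
  have "(p00 - c * (1 - r1) / e) + (c * (1 - r1) * (1 - r0) / e) / DD = (p00 * DD + c * (1 - r1) * (1 - r0 - DD) / e) / DD"
    using d' D' by (simp add: field_simps)
  also have "\<dots> = (p00 * DD + c * (1 - r1) * (1 - x)) / DD"
    unfolding h using d' by simp
  finally have "(p00 - c * (1 - r1) / e) + (c * (1 - r1) * (1 - r0) / e) / DD = (p00 * DD + c * (1 - r1) * (1 - x)) / DD" .
  thus ?thesis unfolding De N unfolding c_def e_def DD_def by simp
qed

lemma e1form:
  fixes p00 p10 r0 r1 x :: real
  assumes D: "r1 * (1 - x) + r0 * x \<noteq> 0"
  shows "((1 - x) * r1 * p10 + x * r0 * p00) / (r1 * (1 - x) + r0 * x)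
     = p00 + (p10 - p00) * ((1 - x) * r1 / (r1 * (1 - x) + r0 * x))"
proof -
  define DD where "DD = r1 * (1 - x) + r0 * x"
  have N: "(1 - x) * r1 * p10 + x * r0 * p00 = p00 * DD + (p10 - p00) * ((1 - x) * r1)"
    by (simp add: DD_def algebra_simps)
  have "DD \<noteq> 0" using D DD_def by simp
  hence "(p00 * DD + (p10 - p00) * ((1 - x) * r1)) / DD = p00 + (p10 - p00) * ((1 - x) * r1 / DD)"
    by (simp add: add_divide_distrib)
  thus ?thesis unfolding N DD_def by simp
qed

lemma e0form:
  fixes p00 p10 r0 r1 x :: real
  assumes D: "(1 - r1) * (1 - x) + (1 - r0) * x \<noteq> 0"
  shows "((1 - x) * (1 - r1) * p10 + x * (1 - r0) * p00) / ((1 - r1) * (1 - x) + (1 - r0) * x)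
     = p00 + (p10 - p00) * ((1 - x) * (1 - r1) / ((1 - r1) * (1 - x) + (1 - r0) * x))"
  using e1form[of "1 - r1" x "1 - r0" p10 p00] D by simp

theorem lemma5:
  fixes p00 p10 \<rho>0 \<rho>1 :: real
  assumes "0 \<le> p00" "p00 \<le> 1" "0 \<le> p10" "p10 \<le> 1" "p00 < p10"
    and "0 \<le> \<rho>0" "\<rho>0 < \<rho>1" "\<rho>1 \<le> 1"
  shows "antimono_on (dom1 \<rho>0 \<rho>1) (gamma1 p00 p10 \<rho>0 \<rho>1) \<and>
     antimono_on (dom0 \<rho>0 \<rho>1) (gamma0 p00 p10 \<rho>0 \<rho>1) \<and>
     concave_on (dom1 \<rho>0 \<rho>1) (gamma1 p00 p10 \<rho>0 \<rho>1) \<and>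
     convex_on (dom0 \<rho>0 \<rho>1) (gamma0 p00 p10 \<rho>0 \<rho>1) \<and>
     (\<forall>\<pi> \<in> dom0 \<rho>0 \<rho>1 \<inter> dom1 \<rho>0 \<rho>1.
           p00 \<le> gamma0 p00 p10 \<rho>0 \<rho>1 \<pi> \<and>
           gamma0 p00 p10 \<rho>0 \<rho>1 \<pi> \<le> gamma1 p00 p10 \<rho>0 \<rho>1 \<pi> \<and>
           gamma1 p00 p10 \<rho>0 \<rho>1 \<pi> \<le> p10)"
proof -
  define d where "d = \<rho>1 - \<rho>0"
  have d: "d > 0" using assms by (simp add: d_def)
  define D1 where "D1 = (\<lambda>x::real. (\<rho>0 - \<rho>1) * x + \<rho>1)"
  define D0 where "D0 = (\<lambda>x::real. (\<rho>1 - \<rho>0) * x + (1 - \<rho>1))"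
  have D1e: "\<rho>1 * (1 - x) + \<rho>0 * x = D1 x" for x by (simp add: D1_def algebra_simps)
  have D0e: "(1 - \<rho>1) * (1 - x) + (1 - \<rho>0) * x = D0 x" for x by (simp add: D0_def algebra_simps)
  have D1nn: "D1 x \<ge> 0" if "0 \<le> x" "x \<le> 1" for x
    unfolding D1e[symmetric] using that assms by (intro add_nonneg_nonneg mult_nonneg_nonneg) auto
  have D0nn: "D0 x \<ge> 0" if "0 \<le> x" "x \<le> 1" for x
    unfolding D0e[symmetric] using that assms by (intro add_nonneg_nonneg mult_nonneg_nonneg) auto
  have iff1: "(D1 x \<noteq> 0) = (D1 x > 0)" if "0 \<le> x" "x \<le> 1" for x
    using D1nn[OF that] by linarith
  have iff0: "(D0 x \<noteq> 0) = (D0 x > 0)" if "0 \<le> x" "x \<le> 1" for x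
    using D0nn[OF that] by linarith
  have dom1e': "dom1 \<rho>0 \<rho>1 = {x. 0 \<le> x \<and> x \<le> 1 \<and> D1 x > 0}"
    unfolding dom1_def D1e using iff1 by blast
  have dom0e': "dom0 \<rho>0 \<rho>1 = {x. 0 \<le> x \<and> x \<le> 1 \<and> D0 x > 0}"
    unfolding dom0_def D0e using iff0 by blast
  have dom1e: "dom1 \<rho>0 \<rho>1 = {x. 0 \<le> x \<and> x \<le> 1 \<and> (\<rho>0 - \<rho>1) * x + \<rho>1 > 0}"
    unfolding dom1e' D1_def ..
  have dom0e: "dom0 \<rho>0 \<rho>1 = {x. 0 \<le> x \<and> x \<le> 1 \<and> (\<rho>1 - \<rho>0) * x + (1 - \<rho>1) > 0}"
    unfolding dom0e' D0_def ..
  have D1p: "D1 x > 0" if "x \<in> dom1 \<rho>0 \<rho>1" for x using that unfolding dom1e' by blast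
  have D0p: "D0 x > 0" if "x \<in> dom0 \<rho>0 \<rho>1" for x using that unfolding dom0e' by blast
  define k1 where "k1 = (p10 - p00) * \<rho>1 * \<rho>0 / d"
  define c1 where "c1 = p00 + (p10 - p00) * \<rho>1 / d"
  define k0 where "k0 = (p10 - p00) * (1 - \<rho>1) * (1 - \<rho>0) / d"
  define c0 where "c0 = p00 - (p10 - p00) * (1 - \<rho>1) / d"
  have k1: "k1 \<ge> 0" unfolding k1_def using assms d by simp
  have k0: "k0 \<ge> 0" unfolding k0_def using assms d by simp
  have g1: "gamma1 p00 p10 \<rho>0 \<rho>1 x = c1 - k1 / D1 x" if "x \<in> dom1 \<rho>0 \<rho>1" for x
  proof -
    have "D1 x \<noteq> 0" using D1p[OF that] by simp
    thus ?thesis unfolding gamma1_def c1_def k1_def d_def D1_def using d d_def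
      by (intro g1form) auto
  qed
  have g0: "gamma0 p00 p10 \<rho>0 \<rho>1 x = c0 + k0 / D0 x" if "x \<in> dom0 \<rho>0 \<rho>1" for x
  proof -
    have "D0 x \<noteq> 0" using D0p[OF that] by simp
    thus ?thesis unfolding gamma0_def c0_def k0_def d_def D0_def using d d_def
      by (intro g0form) auto
  qed
  have A1: "antimono_on (dom1 \<rho>0 \<rho>1) (gamma1 p00 p10 \<rho>0 \<rho>1)"
  proof (rule monotone_onI)
    fix x y assume xy: "x \<in> dom1 \<rho>0 \<rho>1" "y \<in> dom1 \<rho>0 \<rho>1" "x \<le> y"
    have "D1 y \<le> D1 x" unfolding D1_def using xy(3) assms
      by (simp add: mult_right_mono_neg)
    hence "k1 / D1 x \<le> k1 / D1 y"
      using divide_left_mono[OF _ k1] D1p[OF xy(1)] D1p[OF xy(2)] by simp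
    thus "gamma1 p00 p10 \<rho>0 \<rho>1 y \<le> gamma1 p00 p10 \<rho>0 \<rho>1 x"
      using g1[OF xy(1)] g1[OF xy(2)] by simp
  qed
  have A0: "antimono_on (dom0 \<rho>0 \<rho>1) (gamma0 p00 p10 \<rho>0 \<rho>1)"
  proof (rule monotone_onI)
    fix x y assume xy: "x \<in> dom0 \<rho>0 \<rho>1" "y \<in> dom0 \<rho>0 \<rho>1" "x \<le> y"
    have "D0 x \<le> D0 y" unfolding D0_def using xy(3) assms
      by (simp add: mult_left_mono)
    hence "k0 / D0 y \<le> k0 / D0 x"
      using divide_left_mono[OF _ k0] D0p[OF xy(1)] D0p[OF xy(2)] by simp
    thus "gamma0 p00 p10 \<rho>0 \<rho>1 y \<le> gamma0 p00 p10 \<rho>0 \<rho>1 x"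
      using g0[OF xy(1)] g0[OF xy(2)] by simp
  qed
  have C1: "concave_on (dom1 \<rho>0 \<rho>1) (gamma1 p00 p10 \<rho>0 \<rho>1)"
    unfolding concave_on_def
  proof (rule conv_inv[where m="\<rho>0 - \<rho>1" and q="\<rho>1" and k=k1 and c="-c1"])
    show "convex (dom1 \<rho>0 \<rho>1)" unfolding dom1e by (rule convex_dom)
  next
    fix x assume "x \<in> dom1 \<rho>0 \<rho>1" thus "(\<rho>0 - \<rho>1) * x + \<rho>1 > 0" using D1p D1_def by simp
  next
    show "k1 \<ge> 0" by (rule k1)
  next
    fix x assume "x \<in> dom1 \<rho>0 \<rho>1"
    thus "- gamma1 p00 p10 \<rho>0 \<rho>1 x = - c1 + k1 / ((\<rho>0 - \<rho>1) * x + \<rho>1)"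
      using g1 D1_def by simp
  qed
  have C0: "convex_on (dom0 \<rho>0 \<rho>1) (gamma0 p00 p10 \<rho>0 \<rho>1)"
  proof (rule conv_inv[where m="\<rho>1 - \<rho>0" and q="1 - \<rho>1" and k=k0 and c=c0])
    show "convex (dom0 \<rho>0 \<rho>1)" unfolding dom0e by (rule convex_dom)
  next
    fix x assume "x \<in> dom0 \<rho>0 \<rho>1" thus "(\<rho>1 - \<rho>0) * x + (1 - \<rho>1) > 0" using D0p D0_def by simp
  next
    show "k0 \<ge> 0" by (rule k0)
  next
    fix x assume "x \<in> dom0 \<rho>0 \<rho>1"
    thus "gamma0 p00 p10 \<rho>0 \<rho>1 x = c0 + k0 / ((\<rho>1 - \<rho>0) * x + (1 - \<rho>1))"
      using g0 D0_def by simp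
  qed
  have B: "p00 \<le> gamma0 p00 p10 \<rho>0 \<rho>1 x \<and>
           gamma0 p00 p10 \<rho>0 \<rho>1 x \<le> gamma1 p00 p10 \<rho>0 \<rho>1 x \<and>
           gamma1 p00 p10 \<rho>0 \<rho>1 x \<le> p10"
    if x: "x \<in> dom0 \<rho>0 \<rho>1 \<inter> dom1 \<rho>0 \<rho>1" for x
  proof -
    have x01: "0 \<le> x" "x \<le> 1" using x by (auto simp: dom0_def)
    have P0: "D0 x > 0" and P1: "D1 x > 0" using x D0p D1p by auto
    have e0: "gamma0 p00 p10 \<rho>0 \<rho>1 x = p00 + (p10 - p00) * ((1 - x) * (1 - \<rho>1) / D0 x)"
      unfolding gamma0_def using P0 D0e[of x] by (subst e0form) auto
    have e1: "gamma1 p00 p10 \<rho>0 \<rho>1 x = p00 + (p10 - p00) * ((1 - x) * \<rho>1 / D1 x)"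
      unfolding gamma1_def using P1 D1e[of x] by (subst e1form) auto
    have w0: "0 \<le> (1 - x) * (1 - \<rho>1) / D0 x" using x01 assms P0 by simp
    have w1: "(1 - x) * \<rho>1 / D1 x \<le> 1"
    proof -
      have "(1 - x) * \<rho>1 \<le> D1 x" unfolding D1e[symmetric] using x01 assms by simp
      thus ?thesis using P1 by simp
    qed
    have w01: "(1 - x) * (1 - \<rho>1) / D0 x \<le> (1 - x) * \<rho>1 / D1 x"
    proof -
      have "(1 - \<rho>1) * D1 x \<le> \<rho>1 * D0 x"
      proof -
        have "(1 - \<rho>1) * D1 x = (1 - \<rho>1) * \<rho>1 + (1 - \<rho>1) * \<rho>0 * x - (1 - \<rho>1) * \<rho>1 * x"
          by (simp add: D1_def algebra_simps)
        moreover have "\<rho>1 * D0 x = (1 - \<rho>1) * \<rho>1 + \<rho>1 * (1 - \<rho>0) * x - (1 - \<rho>1) * \<rho>1 * x"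
          by (simp add: D0_def algebra_simps)
        moreover have "(1 - \<rho>1) * \<rho>0 * x \<le> \<rho>1 * (1 - \<rho>0) * x"
          using assms x01 by (intro mult_right_mono) (auto simp: algebra_simps)
        ultimately show ?thesis by linarith
      qed
      hence "(1 - \<rho>1) / D0 x \<le> \<rho>1 / D1 x" using P0 P1 by (simp add: divide_simps mult.commute)
      hence "(1 - x) * ((1 - \<rho>1) / D0 x) \<le> (1 - x) * (\<rho>1 / D1 x)"
        using x01 by (intro mult_left_mono) auto
      thus ?thesis by simp
    qed
    have pp: "p10 - p00 > 0" using assms by simp
    define a where "a = (1 - x) * (1 - \<rho>1) / D0 x"
    define b where "b = (1 - x) * \<rho>1 / D1 x"
    have ab: "0 \<le> a" "a \<le> b" "b \<le> 1" using w0 w01 w1 a_def b_def by auto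
    have "0 \<le> (p10 - p00) * a" using ab pp by simp
    moreover have "(p10 - p00) * a \<le> (p10 - p00) * b" using ab pp by (intro mult_left_mono) auto
    moreover have "(p10 - p00) * b \<le> (p10 - p00) * 1" using ab pp by (intro mult_left_mono) auto
    ultimately show ?thesis unfolding e0 e1 a_def[symmetric] b_def[symmetric] by simp
  qed
  show ?thesis using A1 A0 C1 C0 B by blast
qed

end
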